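(* Let $p\in(1,+\infty)$. There exists $\bar C_{n,p}\in(0,+\infty)$ such that for every $v\in L^p(\mathbb R^n)$, every bounded open $\Omega'\subset\mathbb R^n$, every $s\in(0,1)$ and every $h\in\mathbb R^n$, $$\|\tau_hv-v\|^p_{L^p(\Omega')}\le\bar C_{n,p}\,|h|^{sp}(1-s)\int_{B_{|h|}}\frac{\|\tau_yv-v\|^p_{L^p(\Omega'_{|h|})}}{|y|^{n+sp}}\,dy.$$
   Context: $\tau_hf(\cdot):=f(\cdot+h)$; $B_r$ is the open ball of radius $r$ centered at $0$; for $t>0$, $\Omega'_t:=\{x\in\mathbb R^n: \operatorname{dist}(x,\Omega')\le t\}$. *)

theory Defs
  imports "HOL-Analysis.Analysis"
begin

definition nbhd :: "'a::euclidean_space set \<Rightarrow> real \<Rightarrow> 'a set" where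
  "nbhd S t = {x. infdist x S \<le> t}"

definition Lp_pow :: "real \<Rightarrow> 'a::euclidean_space set \<Rightarrow> ('a \<Rightarrow> real) \<Rightarrow> ennreal" where
  "Lp_pow p S f = (\<integral>\<^sup>+ x \<in> S. ennreal (\<bar>f x\<bar> powr p) \<partial>lebesgue)"

end

theory Submission
  imports Defs
begin

lemma powr_convex0:
  assumes "(1::real) \<le> p" shows "convex_on {0..} (\<lambda>x::real. x powr p)"
proof (rule convex_onI)
  fix t x y :: real assume t: "0 < t" "t < 1" and x: "x \<in> {0..}" and y: "y \<in> {0..}"
  show "((1 - t) *\<^sub>R x + t *\<^sub>R y) powr p \<le> (1 - t) * x powr p + t * y powr p"
  proof (cases "x = 0 \<or> y = 0")
    case False
    with x y have "x \<in> {0<..}" "y \<in> {0<..}" by auto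
    from convex_onD[OF powr_convex[OF assms], of t x y] t \<open>x \<in> {0<..}\<close> \<open>y \<in> {0<..}\<close> show ?thesis by simp
  next
    case True
    have tp: "t powr p \<le> t" using t assms by (intro powr_le_one_le) auto
    have tp2: "(1-t) powr p \<le> 1-t" using t assms by (intro powr_le_one_le) auto
    show ?thesis using True
    proof
      assume "x = 0"
      then show ?thesis using t y tp mult_right_mono[OF tp, of "y powr p"]
        by (simp add: powr_mult)
    next
      assume "y = 0"
      then show ?thesis using t x mult_right_mono[OF tp2, of "x powr p"]
        by (simp add: powr_mult)
    qed
  qed
qed (simp add: convex_real_interval)

lemma sum_powr_le:
  fixes a :: "'i \<Rightarrow> real"
  assumes "finite I" "I \<noteq> {}" "1 \<le> p" "\<And>i. i \<in> I \<Longrightarrow> 0 \<le> a i"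
  shows "(\<Sum>i\<in>I. a i) powr p \<le> real (card I) powr (p - 1) * (\<Sum>i\<in>I. a i powr p)"
proof -
  define N where "N = real (card I)"
  have N: "N > 0" using assms by (simp add: N_def card_gt_0_iff)
  have "(\<Sum>i\<in>I. (1/N) *\<^sub>R a i) powr p \<le> (\<Sum>i\<in>I. (1/N) * a i powr p)"
    by (rule convex_on_sum[OF assms(1,2) powr_convex0[OF assms(3)]])
       (use assms N in \<open>auto simp: N_def\<close>)
  hence "((1/N) * (\<Sum>i\<in>I. a i)) powr p \<le> (1/N) * (\<Sum>i\<in>I. a i powr p)"
    by (simp add: sum_distrib_left)
  hence "(1/N) powr p * (\<Sum>i\<in>I. a i) powr p \<le> (1/N) * (\<Sum>i\<in>I. a i powr p)"
    using N assms by (simp add: powr_mult sum_nonneg powr_divide)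
  hence le: "N powr p * ((1/N) powr p * (\<Sum>i\<in>I. a i) powr p) \<le> N powr p * ((1/N) * (\<Sum>i\<in>I. a i powr p))"
    using N by (intro mult_left_mono) auto
  have e1: "N powr p * (1/N) powr p = 1" using N by (simp add: powr_divide)
  have e2: "N powr p * (1/N) = N powr (p - 1)" using N by (simp add: powr_diff)
  have "(\<Sum>i\<in>I. a i) powr p = N powr p * ((1/N) powr p * (\<Sum>i\<in>I. a i) powr p)"
    by (simp only: mult.assoc[symmetric] e1 mult_1)
  also have "\<dots> \<le> N powr p * ((1/N) * (\<Sum>i\<in>I. a i powr p))" by (rule le)
  also have "\<dots> = N powr (p - 1) * (\<Sum>i\<in>I. a i powr p)"
    by (simp only: mult.assoc[symmetric] e2)
  finally show ?thesis by (simp add: N_def)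
qed

lemma sum_abs_powr_le:
  fixes b :: "'i \<Rightarrow> real"
  assumes "finite I" "I \<noteq> {}" "1 \<le> p"
  shows "\<bar>\<Sum>i\<in>I. b i\<bar> powr p \<le> real (card I) powr (p - 1) * (\<Sum>i\<in>I. \<bar>b i\<bar> powr p)"
proof -
  have "\<bar>\<Sum>i\<in>I. b i\<bar> powr p \<le> (\<Sum>i\<in>I. \<bar>b i\<bar>) powr p"
    using assms by (intro powr_mono2) auto
  also have "\<dots> \<le> real (card I) powr (p - 1) * (\<Sum>i\<in>I. \<bar>b i\<bar> powr p)"
    using assms by (intro sum_powr_le) auto
  finally show ?thesis .
qed

lemma nn_integral_translate:
  fixes g :: "'a::euclidean_space \<Rightarrow> ennreal"
  assumes "g \<in> borel_measurable borel"
  shows "(\<integral>\<^sup>+x. g (x + t) \<partial>lborel) = (\<integral>\<^sup>+x. g x \<partial>lborel)"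
proof -
  have "(\<integral>\<^sup>+x. g x \<partial>lborel) = (\<integral>\<^sup>+x. g x \<partial>(distr lborel borel ((+) t)))"
    by (simp add: lborel_distr_plus)
  also have "\<dots> = (\<integral>\<^sup>+x. g (t + x) \<partial>lborel)"
    using assms by (subst nn_integral_distr) auto
  finally show ?thesis by (simp add: add.commute)
qed

lemma nn_integral_reflect:
  fixes g :: "'a::euclidean_space \<Rightarrow> ennreal"
  assumes "g \<in> borel_measurable borel"
  shows "(\<integral>\<^sup>+x. g (c - x) \<partial>lborel) = (\<integral>\<^sup>+x. g x \<partial>lborel)"
proof -
  have "(\<integral>\<^sup>+x. g x \<partial>lborel) = (\<integral>\<^sup>+x. g x \<partial>(distr lborel borel (\<lambda>x. c + (-1) *\<^sub>R x)))"
    using lborel_affine[of "-1" c] by (simp add: density_1)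
  also have "\<dots> = (\<integral>\<^sup>+x. g (c + (-1) *\<^sub>R x) \<partial>lborel)"
    using assms by (subst nn_integral_distr) auto
  finally show ?thesis by simp
qed

lemma nn_integral_translate_le:
  fixes g :: "'a::euclidean_space \<Rightarrow> ennreal"
  assumes "g \<in> borel_measurable borel" "T \<in> sets borel" "\<And>x. x \<in> S \<Longrightarrow> x + t \<in> T"
  shows "(\<integral>\<^sup>+x. g (x + t) * indicator S x \<partial>lborel) \<le> (\<integral>\<^sup>+x. g x * indicator T x \<partial>lborel)"
proof -
  have "(\<integral>\<^sup>+x. g (x + t) * indicator S x \<partial>lborel) \<le> (\<integral>\<^sup>+x. g (x + t) * indicator T (x + t) \<partial>lborel)"
    using assms(3) by (intro nn_integral_mono) (auto simp: indicator_def)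
  also have "\<dots> = (\<integral>\<^sup>+x. g x * indicator T x \<partial>lborel)"
    using assms by (intro nn_integral_translate[where g = "\<lambda>x. g x * indicator T x"]) auto
  finally show ?thesis .
qed

lemma F_measurable:
  fixes u :: "'a::euclidean_space \<Rightarrow> real"
  assumes [measurable]: "u \<in> borel_measurable borel" "T \<in> sets borel"
  shows "(\<lambda>y. \<integral>\<^sup>+x. ennreal (\<bar>u (x + y) - u x\<bar> powr p) * indicator T x \<partial>lborel) \<in> borel_measurable borel"
proof -
  have "(\<lambda>(y, x). ennreal (\<bar>u (x + y) - u x\<bar> powr p) * indicator T x) \<in> borel_measurable (lborel \<Otimes>\<^sub>M lborel)"
    by measurable
  then have "(\<lambda>y. \<integral>\<^sup>+x. ennreal (\<bar>u (x + y) - u x\<bar> powr p) * indicator T x \<partial>lborel) \<in> borel_measurable lborel"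
    by (rule lborel.borel_measurable_nn_integral)
  then show ?thesis by simp
qed

lemma two_powr_le:
  fixes A B :: real assumes "1 \<le> p"
  shows "\<bar>A + B\<bar> powr p \<le> 2 powr (p - 1) * (\<bar>A\<bar> powr p + \<bar>B\<bar> powr p)"
  using sum_abs_powr_le[of "{0::nat,1}" p "\<lambda>i. if i = 0 then A else B"] assms by simp

lemma step_j:
  fixes u :: "'a::euclidean_space \<Rightarrow> real"
  assumes [measurable]: "u \<in> borel_measurable borel" "S \<in> sets borel" "T \<in> sets borel"
    and p: "1 \<le> p"
    and inT1: "\<And>x. x \<in> S \<Longrightarrow> x + (a + y) \<in> T"
    and inT2: "\<And>x. x \<in> S \<Longrightarrow> x + a \<in> T"
  defines "F \<equiv> \<lambda>y. \<integral>\<^sup>+x. ennreal (\<bar>u (x + y) - u x\<bar> powr p) * indicator T x \<partial>lborel"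
  shows "(\<integral>\<^sup>+x. ennreal (\<bar>u (x + a + d) - u (x + a)\<bar> powr p) * indicator S x \<partial>lborel)
     \<le> ennreal (2 powr (p - 1)) * (F (d - y) + F y)"
proof -
  define g1 where "g1 = (\<lambda>w. ennreal (\<bar>u (w + (d - y)) - u w\<bar> powr p))"
  define g2 where "g2 = (\<lambda>w. ennreal (\<bar>u (w + y) - u w\<bar> powr p))"
  have [measurable]: "g1 \<in> borel_measurable borel" "g2 \<in> borel_measurable borel"
    unfolding g1_def g2_def by measurable
  have "(\<integral>\<^sup>+x. ennreal (\<bar>u (x + a + d) - u (x + a)\<bar> powr p) * indicator S x \<partial>lborel)
     \<le> (\<integral>\<^sup>+x. ennreal (2 powr (p - 1)) * (g1 (x + (a + y)) * indicator S x + g2 (x + a) * indicator S x) \<partial>lborel)"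
  proof (intro nn_integral_mono)
    fix x
    have "\<bar>u (x + a + d) - u (x + a)\<bar> powr p \<le> 2 powr (p - 1) * (\<bar>u (x + a + d) - u (x + a + y)\<bar> powr p + \<bar>u (x + a + y) - u (x + a)\<bar> powr p)"
      using two_powr_le[OF p, of "u (x + a + d) - u (x + a + y)" "u (x + a + y) - u (x + a)"] by simp
    moreover have "g1 (x + (a + y)) = ennreal (\<bar>u (x + a + d) - u (x + a + y)\<bar> powr p)"
      unfolding g1_def by (simp add: algebra_simps)
    moreover have "g2 (x + a) = ennreal (\<bar>u (x + a + y) - u (x + a)\<bar> powr p)"
      unfolding g2_def by (simp add: algebra_simps)
    ultimately show "ennreal (\<bar>u (x + a + d) - u (x + a)\<bar> powr p) * indicator S x
       \<le> ennreal (2 powr (p - 1)) * (g1 (x + (a + y)) * indicator S x + g2 (x + a) * indicator S x)"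
      by (auto simp: indicator_def ennreal_mult[symmetric] ennreal_plus[symmetric] simp del: ennreal_plus)
  qed
  also have "\<dots> = ennreal (2 powr (p - 1)) * ((\<integral>\<^sup>+x. g1 (x + (a + y)) * indicator S x \<partial>lborel) + (\<integral>\<^sup>+x. g2 (x + a) * indicator S x \<partial>lborel))"
    by (simp add: nn_integral_cmult nn_integral_add)
  also have "\<dots> \<le> ennreal (2 powr (p - 1)) * (F (d - y) + F y)"
  proof (intro mult_left_mono add_mono)
    show "(\<integral>\<^sup>+x. g1 (x + (a + y)) * indicator S x \<partial>lborel) \<le> F (d - y)"
      unfolding F_def using nn_integral_translate_le[of g1 T S "a + y"] inT1 by (simp add: g1_def)
    show "(\<integral>\<^sup>+x. g2 (x + a) * indicator S x \<partial>lborel) \<le> F y"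
      unfolding F_def using nn_integral_translate_le[of g2 T S a] inT2 by (simp add: g2_def)
  qed auto
  finally show ?thesis .
qed

lemma step_avg:
  fixes u :: "'a::euclidean_space \<Rightarrow> real"
  assumes [measurable]: "u \<in> borel_measurable borel" "S \<in> sets borel" "T \<in> sets borel" "E \<in> sets borel"
    and p: "1 \<le> p"
    and symE: "\<And>y. y \<in> E \<Longrightarrow> d - y \<in> E"
    and inT1: "\<And>x y. x \<in> S \<Longrightarrow> y \<in> E \<Longrightarrow> x + (a + y) \<in> T"
    and inT2: "\<And>x. x \<in> S \<Longrightarrow> x + a \<in> T"
  defines "F \<equiv> \<lambda>y. \<integral>\<^sup>+x. ennreal (\<bar>u (x + y) - u x\<bar> powr p) * indicator T x \<partial>lborel"
  shows "emeasure lborel E * (\<integral>\<^sup>+x. ennreal (\<bar>u (x + a + d) - u (x + a)\<bar> powr p) * indicator S x \<partial>lborel)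
     \<le> ennreal (2 powr p) * (\<integral>\<^sup>+y. F y * indicator E y \<partial>lborel)"
proof -
  define L where "L = (\<integral>\<^sup>+x. ennreal (\<bar>u (x + a + d) - u (x + a)\<bar> powr p) * indicator S x \<partial>lborel)"
  have Fm[measurable]: "F \<in> borel_measurable borel"
    unfolding F_def by (rule F_measurable) auto
  have indE: "indicator E (d - y) = (indicator E y :: ennreal)" for y
    using symE[of y] symE[of "d - y"] by (auto simp: indicator_def)
  have "emeasure lborel E * L = (\<integral>\<^sup>+y. L * indicator E y \<partial>lborel)"
    by (simp add: nn_integral_cmult_indicator mult.commute)
  also have "\<dots> \<le> (\<integral>\<^sup>+y. ennreal (2 powr (p - 1)) * (F (d - y) * indicator E y + F y * indicator E y) \<partial>lborel)"
  proof (intro nn_integral_mono)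
    fix y
    show "L * indicator E y \<le> ennreal (2 powr (p - 1)) * (F (d - y) * indicator E y + F y * indicator E y)"
    proof (cases "y \<in> E")
      case True
      have "L \<le> ennreal (2 powr (p - 1)) * (F (d - y) + F y)"
        unfolding L_def F_def
        by (rule step_j[OF assms(1-3) p]) (use inT1[OF _ True] inT2 in auto)
      then show ?thesis using True by simp
    qed simp
  qed
  also have "\<dots> = ennreal (2 powr (p - 1)) * ((\<integral>\<^sup>+y. F (d - y) * indicator E (d - y) \<partial>lborel) + (\<integral>\<^sup>+y. F y * indicator E y \<partial>lborel))"
    by (simp add: nn_integral_cmult nn_integral_add indE)
  also have "(\<integral>\<^sup>+y. F (d - y) * indicator E (d - y) \<partial>lborel) = (\<integral>\<^sup>+y. F y * indicator E y \<partial>lborel)"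
    by (rule nn_integral_reflect[where g = "\<lambda>y. F y * indicator E y"]) simp
  also have "ennreal (2 powr (p - 1)) * ((\<integral>\<^sup>+y. F y * indicator E y \<partial>lborel) + (\<integral>\<^sup>+y. F y * indicator E y \<partial>lborel))
     = ennreal (2 powr p) * (\<integral>\<^sup>+y. F y * indicator E y \<partial>lborel)"
  proof -
    have "ennreal (2 powr p) = ennreal (2 powr (p - 1)) * 2"
    proof -
      have "2 powr p = 2 powr (p - 1) * (2::real)" by (simp add: powr_diff)
      then show ?thesis by (simp add: ennreal_mult)
    qed
    then show ?thesis by (simp add: mult_2_right[symmetric] mult.assoc mult.commute mult.left_commute)
  qed
  finally show ?thesis unfolding L_def .
qed

lemma step_tel:
  fixes u :: "'a::euclidean_space \<Rightarrow> real"
  assumes [measurable]: "u \<in> borel_measurable borel" "S \<in> sets borel" "T \<in> sets borel" "E \<in> sets borel"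
    and p: "1 \<le> p" and N: "0 < N"
    and symE: "\<And>y. y \<in> E \<Longrightarrow> (h /\<^sub>R real N) - y \<in> E"
    and inT1: "\<And>x y j. x \<in> S \<Longrightarrow> y \<in> E \<Longrightarrow> j < N \<Longrightarrow> x + (real j *\<^sub>R (h /\<^sub>R real N) + y) \<in> T"
    and inT2: "\<And>x j. x \<in> S \<Longrightarrow> j < N \<Longrightarrow> x + real j *\<^sub>R (h /\<^sub>R real N) \<in> T"
  defines "F \<equiv> \<lambda>y. \<integral>\<^sup>+x. ennreal (\<bar>u (x + y) - u x\<bar> powr p) * indicator T x \<partial>lborel"
  shows "emeasure lborel E * (\<integral>\<^sup>+x. ennreal (\<bar>u (x + h) - u x\<bar> powr p) * indicator S x \<partial>lborel)
     \<le> ennreal (real N powr p * 2 powr p) * (\<integral>\<^sup>+y. F y * indicator E y \<partial>lborel)"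
proof -
  define d where "d = h /\<^sub>R real N"
  define X where "X = (\<lambda>j x. ennreal (\<bar>u (x + real j *\<^sub>R d + d) - u (x + real j *\<^sub>R d)\<bar> powr p) * indicator S x)"
  have Xm[measurable]: "X j \<in> borel_measurable borel" for j unfolding X_def by measurable
  have "(\<integral>\<^sup>+x. ennreal (\<bar>u (x + h) - u x\<bar> powr p) * indicator S x \<partial>lborel)
     \<le> (\<integral>\<^sup>+x. ennreal (real N powr (p - 1)) * (\<Sum>j<N. X j x) \<partial>lborel)"
  proof (intro nn_integral_mono)
    fix x
    define f where "f = (\<lambda>i::nat. u (x + real i *\<^sub>R d))"
    have tel: "u (x + h) - u x = (\<Sum>j<N. f (Suc j) - f j)"
      by (subst sum_lessThan_telescope) (use N in \<open>simp add: f_def d_def\<close>)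
    have fs: "f (Suc j) - f j = u (x + real j *\<^sub>R d + d) - u (x + real j *\<^sub>R d)" for j
      by (simp add: f_def algebra_simps)
    have "\<bar>u (x + h) - u x\<bar> powr p \<le> real (card {..<N}) powr (p - 1) * (\<Sum>j<N. \<bar>f (Suc j) - f j\<bar> powr p)"
      unfolding tel using N p by (intro sum_abs_powr_le) auto
    hence le: "\<bar>u (x + h) - u x\<bar> powr p \<le> real N powr (p - 1) * (\<Sum>j<N. \<bar>u (x + real j *\<^sub>R d + d) - u (x + real j *\<^sub>R d)\<bar> powr p)"
      by (simp add: fs)
    show "ennreal (\<bar>u (x + h) - u x\<bar> powr p) * indicator S x \<le> ennreal (real N powr (p - 1)) * (\<Sum>j<N. X j x)"
    proof (cases "x \<in> S")
      case True
      have "ennreal (\<bar>u (x + h) - u x\<bar> powr p) \<le> ennreal (real N powr (p - 1) * (\<Sum>j<N. \<bar>u (x + real j *\<^sub>R d + d) - u (x + real j *\<^sub>R d)\<bar> powr p))"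
        using le by (rule ennreal_leI)
      also have "\<dots> = ennreal (real N powr (p - 1)) * (\<Sum>j<N. X j x)"
        using True by (simp add: X_def ennreal_mult[symmetric] sum_nonneg)
      finally show ?thesis using True by simp
    qed simp
  qed
  also have "\<dots> = ennreal (real N powr (p - 1)) * (\<Sum>j<N. (\<integral>\<^sup>+x. X j x \<partial>lborel))"
    by (simp add: nn_integral_cmult nn_integral_sum)
  finally have L: "(\<integral>\<^sup>+x. ennreal (\<bar>u (x + h) - u x\<bar> powr p) * indicator S x \<partial>lborel)
     \<le> ennreal (real N powr (p - 1)) * (\<Sum>j<N. (\<integral>\<^sup>+x. X j x \<partial>lborel))" .
  have Xj: "emeasure lborel E * (\<integral>\<^sup>+x. X j x \<partial>lborel) \<le> ennreal (2 powr p) * (\<integral>\<^sup>+y. F y * indicator E y \<partial>lborel)"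
    if "j < N" for j
    unfolding X_def F_def
    by (rule step_avg[OF assms(1-4) p]) (use symE inT1 inT2 that in \<open>auto simp: d_def\<close>)
  have "emeasure lborel E * (\<integral>\<^sup>+x. ennreal (\<bar>u (x + h) - u x\<bar> powr p) * indicator S x \<partial>lborel)
     \<le> emeasure lborel E * (ennreal (real N powr (p - 1)) * (\<Sum>j<N. (\<integral>\<^sup>+x. X j x \<partial>lborel)))"
    using L by (rule mult_left_mono) simp
  also have "\<dots> = ennreal (real N powr (p - 1)) * (\<Sum>j<N. emeasure lborel E * (\<integral>\<^sup>+x. X j x \<partial>lborel))"
    by (simp add: sum_distrib_left mult.left_commute)
  also have "\<dots> \<le> ennreal (real N powr (p - 1)) * (\<Sum>j<N. ennreal (2 powr p) * (\<integral>\<^sup>+y. F y * indicator E y \<partial>lborel))"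
    by (intro mult_left_mono sum_mono Xj) auto
  also have "\<dots> = ennreal (real N powr (p - 1) * real N * 2 powr p) * (\<integral>\<^sup>+y. F y * indicator E y \<partial>lborel)"
    by (simp add: ennreal_mult mult.assoc ennreal_of_nat_eq_real_of_nat)
  also have "real N powr (p - 1) * real N = real N powr p"
    using N by (simp add: powr_diff)
  finally show ?thesis .
qed

lemma ball_measure:
  fixes c :: "'a::euclidean_space"
  assumes "0 \<le> \<rho>"
  shows "emeasure lborel (ball c \<rho>) = ennreal (\<rho> ^ DIM('a) * measure lborel (ball (0::'a) 1))"
proof -
  have "emeasure lborel (ball c \<rho>) = emeasure lebesgue (ball c \<rho>)" by simp
  also have "\<dots> = ennreal (\<rho> ^ DIM('a)) * emeasure lebesgue (ball (0::'a) 1)"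
    using assms by (rule emeasure_lebesgue_ball_conv_unit_ball)
  also have "emeasure lebesgue (ball (0::'a) 1) = ennreal (measure lborel (ball (0::'a) 1))"
    using emeasure_lborel_ball_finite[of "0::'a" 1] by (simp add: emeasure_eq_ennreal_measure)
  finally show ?thesis using assms by (simp add: ennreal_mult)
qed

lemma ennreal_div_step:
  fixes L I :: ennreal
  assumes "ennreal a * L \<le> ennreal b * I" "0 < a" "0 \<le> b" "0 \<le> c"
  shows "L * ennreal c \<le> ennreal (b * c / a) * I"
proof -
  have "L * ennreal c = (ennreal a * L) * ennreal (c / a)"
    using assms by (simp add: ennreal_mult[symmetric] mult.commute mult.left_commute)
  also have "\<dots> \<le> (ennreal b * I) * ennreal (c / a)"
    using assms(1) by (rule mult_right_mono) simp
  also have "\<dots> = ennreal (b * c / a) * I"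
    using assms by (simp add: ennreal_mult[symmetric] mult.commute mult.left_commute)
  finally show ?thesis .
qed

lemma nbhd_closed: "closed (nbhd S t)"
  unfolding nbhd_def by (intro closed_Collect_le continuous_intros)

lemma nbhd_mem: "x \<in> S \<Longrightarrow> norm v \<le> t \<Longrightarrow> x + v \<in> nbhd S t"
  unfolding nbhd_def using infdist_le[of x S "x + v"] by (simp add: dist_norm)

lemma const_calc:
  fixes N r \<omega> p s :: real and n :: nat
  assumes "0 < N" "0 < r" "0 < \<omega>"
  shows "N powr p * 2 powr p * (r / N) powr (real n + s * p) * N powr (-(p * (1 - s))) / ((r / N / 8) ^ n * \<omega>)
    = 2 powr p * 8 ^ n / \<omega> * r powr (s * p)"
proof -
  define rk where "rk = r / N"
  have rk: "0 < rk" using assms by (simp add: rk_def)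
  have e1: "rk powr (real n + s * p) = rk ^ n * rk powr (s * p)"
  proof -
    have "rk powr (real n + s * p) = rk powr (real n) * rk powr (s * p)" by (rule powr_add)
    also have "rk powr (real n) = rk ^ n" by (rule powr_realpow[OF rk])
    finally show ?thesis .
  qed
  have e2: "rk powr (s * p) = r powr (s * p) / N powr (s * p)"
    using assms by (simp add: rk_def powr_divide)
  have e3: "N powr p * N powr (-(p * (1 - s))) = N powr (s * p)"
  proof -
    have "N powr p * N powr (-(p * (1 - s))) = N powr (p + -(p * (1 - s)))" by (rule powr_add[symmetric])
    also have "p + -(p * (1 - s)) = s * p" by (simp add: algebra_simps)
    finally show ?thesis .
  qed
  have e4: "(rk / 8) ^ n = rk ^ n / 8 ^ n" by (simp add: power_divide)
  have "N powr p * 2 powr p * rk powr (real n + s * p) * N powr (-(p * (1 - s))) / ((rk / 8) ^ n * \<omega>)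
     = (N powr p * N powr (-(p * (1 - s)))) * 2 powr p * rk powr (s * p) * 8 ^ n / \<omega>"
    unfolding e1 e4 using rk assms by (simp add: field_simps)
  also have "\<dots> = 2 powr p * 8 ^ n / \<omega> * r powr (s * p)"
    unfolding e2 e3 using assms by (simp add: field_simps)
  finally show ?thesis by (simp add: rk_def)
qed

lemma per_k:
  fixes u :: "'a::euclidean_space \<Rightarrow> real"
  assumes [measurable]: "u \<in> borel_measurable borel" "S \<in> sets borel"
    and p: "1 \<le> p" and s: "0 < s" and h: "h \<noteq> 0"
  defines "T \<equiv> nbhd S (norm h)"
  defines "F \<equiv> \<lambda>y. \<integral>\<^sup>+x. ennreal (\<bar>u (x + y) - u x\<bar> powr p) * indicator T x \<partial>lborel"
  defines "G \<equiv> \<lambda>y. F y * ennreal (1 / norm y powr (real DIM('a) + s * p))"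
  defines "K \<equiv> 2 powr p * 8 ^ DIM('a) / measure lborel (ball (0::'a) 1)"
  shows "(\<integral>\<^sup>+x. ennreal (\<bar>u (x + h) - u x\<bar> powr p) * indicator S x \<partial>lborel) * ennreal ((2 ^ k) powr (-(p * (1 - s))))
    \<le> ennreal (K * norm h powr (s * p)) *
       (\<integral>\<^sup>+y. G y * indicator (ball ((1/2) *\<^sub>R (h /\<^sub>R 2 ^ k)) (norm h / 2 ^ k / 8)) y \<partial>lborel)"
proof -
  define N :: nat where "N = 2 ^ k"
  define r where "r = norm h"
  define rk where "rk = r / real N"
  define d where "d = h /\<^sub>R real N"
  define E where "E = ball ((1/2) *\<^sub>R d) (rk / 8)"
  define \<omega> where "\<omega> = measure lborel (ball (0::'a) 1)"
  have \<omega>: "0 < \<omega>" unfolding \<omega>_def using content_ball_pos[of 1 "0::'a"] by simp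
  have N: "0 < N" "real N = 2 ^ k" by (auto simp: N_def)
  have r: "0 < r" using h by (simp add: r_def)
  have rk: "0 < rk" using r N by (simp add: rk_def)
  have nd: "norm d = rk" using N by (simp add: d_def rk_def r_def divide_inverse mult.commute)
  have Tb[measurable]: "T \<in> sets borel" unfolding T_def using nbhd_closed by (rule borel_closed)
  have Eb[measurable]: "E \<in> sets borel" unfolding E_def by simp
  have memE: "norm y < 5 * rk / 8" "3 * rk / 8 < norm y" if "y \<in> E" for y
  proof -
    have "norm (y - (1/2) *\<^sub>R d) < rk / 8" using that by (simp add: E_def dist_norm norm_minus_commute)
    moreover have "norm ((1/2) *\<^sub>R d) = rk / 2" using nd by simp
    moreover have "norm y \<le> norm (y - (1/2) *\<^sub>R d) + norm ((1/2) *\<^sub>R d)"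
      using norm_triangle_ineq[of "y - (1/2) *\<^sub>R d" "(1/2) *\<^sub>R d"] by simp
    moreover have "norm ((1/2) *\<^sub>R d) \<le> norm y + norm (y - (1/2) *\<^sub>R d)"
      using norm_triangle_ineq4[of y "y - (1/2) *\<^sub>R d"] by simp
    ultimately show "norm y < 5 * rk / 8" "3 * rk / 8 < norm y" by linarith+
  qed
  have symE: "d - y \<in> E" if "y \<in> E" for y
  proof -
    have dd: "(1/2) *\<^sub>R d + (1/2) *\<^sub>R d = d" by (simp only: scaleR_add_left[symmetric]) simp
    have "(1/2) *\<^sub>R d - (d - y) = -((1/2) *\<^sub>R d - y)"
      by (subst (2) dd[symmetric]) (simp add: algebra_simps)
    then show ?thesis using that unfolding E_def mem_ball dist_norm by (simp only: norm_minus_cancel)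
  qed
  have jle: "norm (real j *\<^sub>R d) \<le> real (N - 1) * rk" if "j < N" for j
  proof -
    have "real j \<le> real (N - 1)" using that by simp
    then have "real j * rk \<le> real (N - 1) * rk" using nd by (intro mult_right_mono) auto
    then show ?thesis using nd by simp
  qed
  have Nrk: "real N * rk = r" using N by (simp add: rk_def)
  have inT1: "x + (real j *\<^sub>R d + y) \<in> T" if "x \<in> S" "y \<in> E" "j < N" for x y j
  proof -
    have "norm (real j *\<^sub>R d + y) \<le> norm (real j *\<^sub>R d) + norm y" by (rule norm_triangle_ineq)
    also have "\<dots> \<le> real (N - 1) * rk + rk" using jle[OF that(3)] memE[OF that(2)] by simp
    also have "\<dots> = r" using N Nrk by (simp add: of_nat_diff algebra_simps)
    finally show ?thesis unfolding T_def r_def[symmetric] by (rule nbhd_mem[OF that(1)])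
  qed
  have inT2: "x + real j *\<^sub>R d \<in> T" if "x \<in> S" "j < N" for x j
  proof -
    have "real (N - 1) * rk \<le> real N * rk" using rk by (intro mult_right_mono) auto
    then have "norm (real j *\<^sub>R d) \<le> r" using jle[OF that(2)] Nrk by linarith
    then show ?thesis unfolding T_def r_def[symmetric] by (rule nbhd_mem[OF that(1)])
  qed
  have st: "emeasure lborel E * (\<integral>\<^sup>+x. ennreal (\<bar>u (x + h) - u x\<bar> powr p) * indicator S x \<partial>lborel)
     \<le> ennreal (real N powr p * 2 powr p) * (\<integral>\<^sup>+y. F y * indicator E y \<partial>lborel)"
    unfolding F_def
    by (rule step_tel[OF assms(1,2) Tb Eb p N(1)]) (use symE inT1 inT2 in \<open>auto simp: d_def\<close>)
  have FG: "(\<integral>\<^sup>+y. F y * indicator E y \<partial>lborel) \<le> ennreal (rk powr (real DIM('a) + s * p)) * (\<integral>\<^sup>+y. G y * indicator E y \<partial>lborel)"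
  proof -
    have "(\<integral>\<^sup>+y. F y * indicator E y \<partial>lborel) \<le> (\<integral>\<^sup>+y. ennreal (rk powr (real DIM('a) + s * p)) * (G y * indicator E y) \<partial>lborel)"
    proof (intro nn_integral_mono)
      fix y show "F y * indicator E y \<le> ennreal (rk powr (real DIM('a) + s * p)) * (G y * indicator E y)"
      proof (cases "y \<in> E")
        case True
        define e where "e = real DIM('a) + s * p"
        have e: "0 < e" using s p by (simp add: e_def add_pos_nonneg)
        have y0: "0 < norm y" using memE(2)[OF True] rk by linarith
        have "norm y powr e \<le> rk powr e" using memE(1)[OF True] e rk by (intro powr_mono2) auto
        hence "1 \<le> rk powr e * (1 / norm y powr e)" using y0 by (simp add: field_simps)
        hence "1 \<le> ennreal (rk powr e) * ennreal (1 / norm y powr e)"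
          by (subst ennreal_mult[symmetric]) auto
        hence "F y * 1 \<le> F y * (ennreal (rk powr e) * ennreal (1 / norm y powr e))"
          by (intro mult_left_mono) auto
        then show ?thesis using True
          by (simp add: G_def e_def mult.commute mult.left_commute)
      qed simp
    qed
    also have "\<dots> = ennreal (rk powr (real DIM('a) + s * p)) * (\<integral>\<^sup>+y. G y * indicator E y \<partial>lborel)"
      by (rule nn_integral_cmult) (simp add: G_def F_def)
    finally show ?thesis .
  qed
  have mE: "emeasure lborel E = ennreal ((rk / 8) ^ DIM('a) * \<omega>)"
    unfolding E_def \<omega>_def using rk by (intro ball_measure) simp
  have "ennreal ((rk / 8) ^ DIM('a) * \<omega>) * (\<integral>\<^sup>+x. ennreal (\<bar>u (x + h) - u x\<bar> powr p) * indicator S x \<partial>lborel)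
     \<le> ennreal (real N powr p * 2 powr p * rk powr (real DIM('a) + s * p)) * (\<integral>\<^sup>+y. G y * indicator E y \<partial>lborel)"
  proof -
    have "ennreal (real N powr p * 2 powr p) * (\<integral>\<^sup>+y. F y * indicator E y \<partial>lborel)
      \<le> ennreal (real N powr p * 2 powr p) * (ennreal (rk powr (real DIM('a) + s * p)) * (\<integral>\<^sup>+y. G y * indicator E y \<partial>lborel))"
      using FG by (rule mult_left_mono) simp
    then show ?thesis using st mE by (simp add: ennreal_mult mult.assoc)
  qed
  from ennreal_div_step[OF this, of "real N powr (-(p * (1 - s)))"]
  have "(\<integral>\<^sup>+x. ennreal (\<bar>u (x + h) - u x\<bar> powr p) * indicator S x \<partial>lborel) * ennreal (real N powr (-(p * (1 - s))))
    \<le> ennreal (real N powr p * 2 powr p * rk powr (real DIM('a) + s * p) * real N powr (-(p * (1 - s))) / ((rk / 8) ^ DIM('a) * \<omega>)) * (\<integral>\<^sup>+y. G y * indicator E y \<partial>lborel)"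
    using rk \<omega> by simp
  also have "real N powr p * 2 powr p * rk powr (real DIM('a) + s * p) * real N powr (-(p * (1 - s))) / ((rk / 8) ^ DIM('a) * \<omega>)
    = K * norm h powr (s * p)"
    unfolding rk_def K_def \<omega>_def[symmetric] r_def
    by (rule const_calc) (use N r \<omega> in \<open>auto simp: r_def\<close>)
  finally show ?thesis using N by (simp add: E_def d_def rk_def r_def)
qed

lemma memE_gen:
  fixes h y :: "'a::euclidean_space"
  assumes "y \<in> ball ((1/2) *\<^sub>R (h /\<^sub>R c)) (norm h / c / 8)" "0 < c"
  shows "norm y < 5 * (norm h / c) / 8 \<and> 3 * (norm h / c) / 8 < norm y"
proof -
  define d where "d = h /\<^sub>R c"
  define R where "R = norm h / c"
  have nd: "norm d = R" using assms(2) unfolding d_def R_def by (simp add: divide_inverse mult.commute)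
  have "dist ((1/2) *\<^sub>R d) y < R / 8" using assms(1) unfolding d_def R_def by simp
  hence a: "norm (y - (1/2) *\<^sub>R d) < R / 8" by (simp add: dist_norm norm_minus_commute)
  have b: "norm ((1/2) *\<^sub>R d) = R / 2" using nd by simp
  have c: "norm y \<le> norm (y - (1/2) *\<^sub>R d) + norm ((1/2) *\<^sub>R d)"
    using norm_triangle_ineq[of "y - (1/2) *\<^sub>R d" "(1/2) *\<^sub>R d"] by simp
  have e: "norm ((1/2) *\<^sub>R d) \<le> norm y + norm (y - (1/2) *\<^sub>R d)"
    using norm_triangle_ineq4[of y "y - (1/2) *\<^sub>R d"] by simp
  have "norm y < 5 * R / 8 \<and> 3 * R / 8 < norm y" using a b c e by linarith
  then show ?thesis by (simp add: R_def)
qed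

lemma pow2_powr: "((2::real) ^ k) powr a = (2 powr a) ^ k"
proof -
  have "((2::real) ^ k) powr a = (2 powr real k) powr a" by (simp add: powr_realpow)
  also have "\<dots> = 2 powr (real k * a)" by (simp add: powr_powr)
  also have "\<dots> = (2 powr a) powr real k" by (simp add: powr_powr mult.commute)
  also have "\<dots> = (2 powr a) ^ k" by (simp add: powr_realpow)
  finally show ?thesis .
qed

lemma one_minus_q:
  assumes "0 \<le> (x::real)" shows "1 - 2 powr (-x) \<le> x"
proof -
  have "2 powr (-x) = exp (-x * ln 2)" by (simp add: powr_def)
  also have "\<dots> \<ge> 1 + (-x * ln 2)" by (rule exp_ge_add_one_self)
  finally have "1 - 2 powr (-x) \<le> x * ln 2" by simp
  also have "x * ln 2 \<le> x * 1" using assms ln_2_less_1 by (intro mult_left_mono) auto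
  finally show ?thesis by simp
qed

lemma main_borel:
  fixes u :: "'a::euclidean_space \<Rightarrow> real"
  assumes [measurable]: "u \<in> borel_measurable borel" "S \<in> sets borel"
    and p: "1 \<le> p" and s: "0 < s" "s < 1" and h: "h \<noteq> 0"
  defines "T \<equiv> nbhd S (norm h)"
  defines "F \<equiv> \<lambda>y. \<integral>\<^sup>+x. ennreal (\<bar>u (x + y) - u x\<bar> powr p) * indicator T x \<partial>lborel"
  defines "G \<equiv> \<lambda>y. F y * ennreal (1 / norm y powr (real DIM('a) + s * p))"
  defines "K \<equiv> 2 powr p * 8 ^ DIM('a) / measure lborel (ball (0::'a) 1)"
  shows "(\<integral>\<^sup>+x. ennreal (\<bar>u (x + h) - u x\<bar> powr p) * indicator S x \<partial>lborel)
    \<le> ennreal (K * p * norm h powr (s * p) * (1 - s)) * (\<integral>\<^sup>+y. G y * indicator (ball 0 (norm h)) y \<partial>lborel)"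
proof -
  define L where "L = (\<integral>\<^sup>+x. ennreal (\<bar>u (x + h) - u x\<bar> powr p) * indicator S x \<partial>lborel)"
  define E where "E = (\<lambda>k::nat. ball ((1/2) *\<^sub>R (h /\<^sub>R 2 ^ k)) (norm h / 2 ^ k / 8))"
  define r where "r = norm h"
  define q :: real where "q = 2 powr (-(p * (1 - s)))"
  define J where "J = (\<integral>\<^sup>+y. G y * indicator (ball 0 (norm h)) y \<partial>lborel)"
  have r: "0 < r" using h by (simp add: r_def)
  have \<omega>: "0 < measure lborel (ball (0::'a) 1)" using content_ball_pos[of 1 "0::'a"] by simp
  have K: "0 < K" unfolding K_def using \<omega> by simp
  have x0: "0 \<le> p * (1 - s)" using p s by simp
  have q: "0 < q" "q < 1" unfolding q_def using p s by (auto intro!: powr_less_one)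
  have Tb[measurable]: "T \<in> sets borel" unfolding T_def using nbhd_closed by (rule borel_closed)
  have Fm[measurable]: "F \<in> borel_measurable borel" unfolding F_def by (rule F_measurable) auto
  have Gm[measurable]: "G \<in> borel_measurable borel" unfolding G_def by measurable
  have Eb[measurable]: "E k \<in> sets borel" for k unfolding E_def by simp
  have perk: "L * ennreal (q ^ k) \<le> ennreal (K * r powr (s * p)) * (\<integral>\<^sup>+y. G y * indicator (E k) y \<partial>lborel)" for k
  proof -
    have "q ^ k = (2 ^ k) powr (-(p * (1 - s)))" unfolding q_def by (rule pow2_powr[symmetric])
    then show ?thesis
      using per_k[OF assms(1,2) p s(1) h, of k] unfolding L_def E_def r_def G_def F_def T_def K_def
      by simp
  qed
  have disj: "False" if "y \<in> E k" "y \<in> E m" "k < m" for y k m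
  proof -
    have a: "norm y < 5 * (r / 2 ^ m) / 8" using memE_gen[where y=y and h=h and c="2 ^ m", THEN conjunct1] that(2) by (simp add: E_def r_def)
    have b: "3 * (r / 2 ^ k) / 8 < norm y" using memE_gen[where y=y and h=h and c="2 ^ k", THEN conjunct2] that(1) by (simp add: E_def r_def)
    have "(2::real) ^ k * 2 \<le> 2 ^ m" using that(3)
    proof -
      have "(2::real) ^ Suc k \<le> 2 ^ m" using that(3) by (intro power_increasing) auto
      then show ?thesis by (simp add: mult.commute)
    qed
    hence "r / 2 ^ m \<le> r / (2 ^ k * 2)" using r by (intro divide_left_mono) auto
    hence c: "r / 2 ^ m \<le> (r / 2 ^ k) / 2" by simp
    define A where "A = r / 2 ^ m"
    define B where "B = r / 2 ^ k"
    have "norm y < 5 * A / 8" "3 * B / 8 < norm y" "A \<le> B / 2" "0 < B"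
      using a b c r unfolding A_def B_def by auto
    then show False by linarith
  qed
  have Esub: "y \<in> ball 0 r" if "y \<in> E k" for y k
  proof -
    have "norm y < 5 * (r / 2 ^ k) / 8" using memE_gen[where y=y and h=h and c="2 ^ k", THEN conjunct1] that by (simp add: E_def r_def)
    moreover have "r / 2 ^ k \<le> r" using r by (simp add: divide_le_eq one_le_power)
    ultimately show ?thesis using r by simp
  qed
  have pw: "(\<Sum>k. G y * indicator (E k) y) \<le> G y * indicator (ball 0 r) y" for y
  proof (cases "\<exists>k. y \<in> E k")
    case True
    then obtain k0 where k0: "y \<in> E k0" by blast
    have "(\<Sum>k. G y * indicator (E k) y) = (\<Sum>k\<in>{k0}. G y * indicator (E k) y)"
    proof (rule suminf_finite)
      fix k assume "k \<notin> {k0}"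
      then have "y \<notin> E k" using disj[of y k k0] disj[of y k0 k] k0 by (cases "k < k0") auto
      then show "G y * indicator (E k) y = 0" by simp
    qed simp
    then show ?thesis using k0 Esub[OF k0] by simp
  next
    case False
    then show ?thesis by simp
  qed
  have "L * ennreal (1 / (1 - q)) = L * (\<Sum>k. ennreal (q ^ k))"
  proof -
    have "(\<Sum>k. ennreal (q ^ k)) = ennreal (\<Sum>k. q ^ k)"
      using q by (intro suminf_ennreal2) (auto intro: summable_geometric)
    also have "(\<Sum>k. q ^ k) = 1 / (1 - q)" using q by (simp add: suminf_geometric)
    finally show ?thesis by simp
  qed
  also have "\<dots> = (\<Sum>k. L * ennreal (q ^ k))" by (simp add: mult.commute)
  also have "\<dots> \<le> (\<Sum>k. ennreal (K * r powr (s * p)) * (\<integral>\<^sup>+y. G y * indicator (E k) y \<partial>lborel))"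
    by (intro suminf_le perk) auto
  also have "\<dots> = ennreal (K * r powr (s * p)) * (\<Sum>k. (\<integral>\<^sup>+y. G y * indicator (E k) y \<partial>lborel))"
    by simp
  also have "(\<Sum>k. (\<integral>\<^sup>+y. G y * indicator (E k) y \<partial>lborel)) = (\<integral>\<^sup>+y. (\<Sum>k. G y * indicator (E k) y) \<partial>lborel)"
    by (rule nn_integral_suminf[symmetric]) simp
  also have "\<dots> \<le> J" unfolding J_def r_def[symmetric] by (intro nn_integral_mono pw)
  finally have main: "L * ennreal (1 / (1 - q)) \<le> ennreal (K * r powr (s * p)) * J"
    by (simp add: mult_left_mono)
  have "L = (L * ennreal (1 / (1 - q))) * ennreal (1 - q)"
    using q by (simp add: mult.assoc ennreal_mult[symmetric])
  also have "\<dots> \<le> (ennreal (K * r powr (s * p)) * J) * ennreal (1 - q)"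
    using main by (rule mult_right_mono) simp
  also have "\<dots> = ennreal (K * r powr (s * p) * (1 - q)) * J"
    using q K by (simp add: ennreal_mult mult.commute mult.left_commute)
  also have "\<dots> \<le> ennreal (K * p * r powr (s * p) * (1 - s)) * J"
  proof (intro mult_right_mono ennreal_leI)
    have "1 - q \<le> p * (1 - s)" unfolding q_def by (rule one_minus_q[OF x0])
    then have "K * r powr (s * p) * (1 - q) \<le> K * r powr (s * p) * (p * (1 - s))"
      using K by (intro mult_left_mono) auto
    moreover have "K * r powr (s * p) * (p * (1 - s)) = K * p * r powr (s * p) * (1 - s)"
      by (simp only: mult_ac)
    ultimately show "K * r powr (s * p) * (1 - q) \<le> K * p * r powr (s * p) * (1 - s)"
      by simp
  qed simp
  finally show ?thesis unfolding L_def J_def r_def .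
qed

lemma AE_shift:
  fixes v u :: "'a::euclidean_space \<Rightarrow> real"
  assumes "AE x in lborel. v x = u x"
  shows "AE x in lborel. v (x + t) = u (x + t)"
proof -
  obtain N where N0: "{x \<in> space lborel. \<not> v x = u x} \<subseteq> N" "emeasure lborel N = 0" "N \<in> sets lborel"
    using assms by (rule AE_E)
  have N: "{x \<in> space lborel. \<not> v x = u x} \<subseteq> N" "N \<in> null_sets lborel"
    using N0 by (auto simp: null_sets_def)
  have Nb[measurable]: "N \<in> sets borel" using N0(3) by simp
  have "AE x in lborel. x \<notin> N" using N(2) by (rule AE_not_in)
  hence "AE x in distr lborel borel ((+) t). x \<notin> N" unfolding lborel_distr_plus .
  hence "AE x in lborel. t + x \<notin> N" by (subst (asm) AE_distr_iff) auto
  then show ?thesis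
    by eventually_elim (use N(1) in \<open>auto simp: add.commute\<close>)
qed

lemma Lp_eq:
  fixes v u :: "'a::euclidean_space \<Rightarrow> real"
  assumes "AE x in lborel. v x = u x"
  shows "Lp_pow p A (\<lambda>x. v (x + t) - v x) = (\<integral>\<^sup>+x. ennreal (\<bar>u (x + t) - u x\<bar> powr p) * indicator A x \<partial>lborel)"
proof -
  have "Lp_pow p A (\<lambda>x. v (x + t) - v x) = (\<integral>\<^sup>+x. ennreal (\<bar>v (x + t) - v x\<bar> powr p) * indicator A x \<partial>lborel)"
    unfolding Lp_pow_def by (rule nn_integral_completion)
  also have "\<dots> = (\<integral>\<^sup>+x. ennreal (\<bar>u (x + t) - u x\<bar> powr p) * indicator A x \<partial>lborel)"
  proof (rule nn_integral_cong_AE)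
    show "AE x in lborel. ennreal (\<bar>v (x + t) - v x\<bar> powr p) * indicator A x = ennreal (\<bar>u (x + t) - u x\<bar> powr p) * indicator A x"
      using AE_shift[OF assms, of t] assms by eventually_elim simp
  qed
  finally show ?thesis .
qed

theorem mainTheorem16:
  fixes p :: real
  assumes "1 < p"
  shows "\<exists>C::real. 0 < C \<and>
    (\<forall>(v::'a::euclidean_space \<Rightarrow> real) \<Omega> s h.
      v \<in> borel_measurable lebesgue \<longrightarrow>
      integrable lebesgue (\<lambda>x. \<bar>v x\<bar> powr p) \<longrightarrow>
      open \<Omega> \<longrightarrow> bounded \<Omega> \<longrightarrow> 0 < s \<longrightarrow> s < 1 \<longrightarrow>
      Lp_pow p \<Omega> (\<lambda>x. v (x + h) - v x)
        \<le> ennreal (C * norm h powr (s * p) * (1 - s)) *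
          (\<integral>\<^sup>+ y \<in> ball 0 (norm h).
             Lp_pow p (nbhd \<Omega> (norm h)) (\<lambda>x. v (x + y) - v x)
             * ennreal (1 / norm y powr (real DIM('a) + s * p)) \<partial>lebesgue))"
proof -
  define K where "K = 2 powr p * 8 ^ DIM('a) / measure lborel (ball (0::'a) 1)"
  have \<omega>: "0 < measure lborel (ball (0::'a) 1)" using content_ball_pos[of 1 "0::'a"] by simp
  have K: "0 < K" unfolding K_def using \<omega> by simp
  have p: "1 \<le> p" using assms by simp
  show ?thesis
  proof (intro exI[of _ "K * p"] conjI allI impI)
    show "0 < K * p" using K assms by simp
    fix v :: "'a \<Rightarrow> real" and \<Omega> :: "'a set" and s :: real and h :: 'a
    assume v: "v \<in> borel_measurable lebesgue" and \<Omega>: "open \<Omega>" and s: "0 < s" "s < 1"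
    show "Lp_pow p \<Omega> (\<lambda>x. v (x + h) - v x)
        \<le> ennreal (K * p * norm h powr (s * p) * (1 - s)) *
          (\<integral>\<^sup>+ y \<in> ball 0 (norm h).
             Lp_pow p (nbhd \<Omega> (norm h)) (\<lambda>x. v (x + y) - v x)
             * ennreal (1 / norm y powr (real DIM('a) + s * p)) \<partial>lebesgue)"
    proof (cases "h = 0")
      case True
      then show ?thesis using assms by (simp add: Lp_pow_def)
    next
      case False
      obtain u where u: "u \<in> borel_measurable lborel" "AE x in lborel. v x = u x"
        using completion_ex_borel_measurable_real[OF v] by blast
      have ub[measurable]: "u \<in> borel_measurable borel" using u(1) by simp
      have Sb[measurable]: "\<Omega> \<in> sets borel" using \<Omega> by simp
      define T where "T = nbhd \<Omega> (norm h)"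
      define F where "F = (\<lambda>y. \<integral>\<^sup>+x. ennreal (\<bar>u (x + y) - u x\<bar> powr p) * indicator T x \<partial>lborel)"
      define G where "G = (\<lambda>y. F y * ennreal (1 / norm y powr (real DIM('a) + s * p)))"
      have lhs: "Lp_pow p \<Omega> (\<lambda>x. v (x + h) - v x) = (\<integral>\<^sup>+x. ennreal (\<bar>u (x + h) - u x\<bar> powr p) * indicator \<Omega> x \<partial>lborel)"
        by (rule Lp_eq[OF u(2)])
      have rhs: "(\<integral>\<^sup>+ y \<in> ball 0 (norm h).
             Lp_pow p (nbhd \<Omega> (norm h)) (\<lambda>x. v (x + y) - v x)
             * ennreal (1 / norm y powr (real DIM('a) + s * p)) \<partial>lebesgue)
         = (\<integral>\<^sup>+y. G y * indicator (ball 0 (norm h)) y \<partial>lborel)"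
        by (subst nn_integral_completion) (simp add: Lp_eq[OF u(2)] G_def F_def T_def)
      show ?thesis unfolding lhs rhs G_def F_def T_def K_def
        by (rule main_borel[OF ub Sb p s False])
    qed
  qed
qed

end
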